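(* Let $G=(V,E)$ be a finite graph, and let $W,\widehat W$ be maps assigning nonnegative weights to connected subgraphs of $G$, such that for every connected subgraph $C$: $\widehat W(C)=0$ if $W(C)=0$, and $0<\widehat W(C)<W(C)$ if $W(C)>0$. Put $W_{\rm red}=\widehat W$, $W_{\rm blue}=W-\widehat W$, and let $\mu_{G,\mathbf W}$ be the joint measure on pairs $(A,\boldsymbol\sigma)$, $A\subseteq E$, $\boldsymbol\sigma\in\{\mathrm{red},\mathrm{blue}\}^V$, $$\mu_{G,\mathbf W}(A,\boldsymbol\sigma)\propto\Delta(A,\boldsymbol\sigma)\prod_{C\in K(A)}W_{\sigma(C)}(C).$$ Suppose that for each $\boldsymbol\sigma$ with $(A,\boldsymbol\sigma)\in\mathrm{supp}(\mu_{G,\mathbf W})$ for some $A$, $P_{G_{\rm red}(\boldsymbol\sigma),\widehat W}$ is a transition matrix on $\{A_{\rm red}\subseteq E(G_{\rm red}(\boldsymbol\sigma))\}$ with stationary distribution $\phi_{G_{\rm red}(\boldsymbol\sigma),\widehat W}$, and that $P_{G,\widehat W}$ (the case where all vertices are red) is ergodic on $\mathrm{supp}(\phi_{G,\widehat W})$. Define transition matrices on $\mathrm{supp}(\mu_{G,\mathbf W})$ by $$P_{\rm colour}[(A,\boldsymbol\sigma)\to(A',\boldsymbol\sigma')]=\delta_{A,A'}\,\Delta(A,\boldsymbol\sigma')\prod_{C\in K(A)}\frac{W_{\sigma'(C)}(C)}{W(C)},$$ $$P_{\rm bond}[(A,\boldsymbol\sigma)\to(A',\boldsymbol\sigma')]=\delta_{\boldsymbol\sigma,\boldsymbol\sigma'}\,\Delta(A',\boldsymbol\sigma)\,\delta_{A_{\rm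 blue},A'_{\rm blue}}\,P_{G_{\rm red}(\boldsymbol\sigma),\widehat W}[A_{\rm red}\to A'_{\rm red}].$$ Then $P:=P_{\rm colour}P_{\rm bond}$ is ergodic on $\mathrm{supp}(\mu_{G,\mathbf W})$ and has stationary distribution $\mu_{G,\mathbf W}$. (Consequently, since the marginal of $\mu_{G,\mathbf W}$ on $A$ is $\phi_{G,W}$, the $A$-component of this chain samples $\phi_{G,W}$.)
   Context: For a graph $H$ (a subgraph of $G$) and $A\subseteq E(H)$, $K(A)$ denotes the set of connected components of the spanning subgraph $(V(H),A)$, and $\phi_{H,W}(A)\propto\prod_{C\in K(A)}W(C)$ for $A\subseteq E(H)$. For $\boldsymbol\sigma\in\{\mathrm{red},\mathrm{blue}\}^V$, $\Delta(A,\boldsymbol\sigma)$ is the indicator that $\sigma_i=\sigma_j$ for every edge $ij\in A$; when $\Delta(A,\boldsymbol\sigma)=1$, $\sigma(C)$ denotes the common colour of the vertices of the component $C$. $G_{\rm red}(\boldsymbol\sigma)$ and $G_{\rm blue}(\boldsymbol\sigma)$ are the subgraphs of $G$ induced by the red and blue vertices respectively, $A_{\rm red}=A\cap E(G_{\rm red}(\boldsymbol\sigma))$ and $A_{\rm blue}=A\cap E(G_{\rm blue}(\boldsymbol\sigma))$. $\mathrm{supp}$ denotes the set of states of positive probability. "Ergodic" means irreducible. *)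

theory Defs
  imports Complex_Main "HOL-Library.FuncSet"
begin

text \<open>Graphs: vertex set V :: 'v set, edge set E :: 'e set, and ends :: 'e => 'v set
  giving the set of endpoints of each edge (one endpoint for a loop, two otherwise).
  A (sub)graph is represented as a pair (vertex set, edge set).\<close>

datatype colour = Red | Blue

definition finite_graph :: "'v set \<Rightarrow> 'e set \<Rightarrow> ('e \<Rightarrow> 'v set) \<Rightarrow> bool" where
  "finite_graph V E ends \<longleftrightarrow> finite V \<and> finite E \<and>
     (\<forall>e\<in>E. ends e \<subseteq> V \<and> 1 \<le> card (ends e) \<and> card (ends e) \<le> 2)"

definition adjrel :: "('e \<Rightarrow> 'v set) \<Rightarrow> 'e set \<Rightarrow> ('v \<times> 'v) set" where
  "adjrel ends A = {(x, y). \<exists>e\<in>A. x \<in> ends e \<and> y \<in> ends e}"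

definition connrel :: "('e \<Rightarrow> 'v set) \<Rightarrow> 'v set \<Rightarrow> 'e set \<Rightarrow> ('v \<times> 'v) set" where
  "connrel ends U A = {(x, y). x \<in> U \<and> y \<in> U \<and> (x, y) \<in> (adjrel ends A)\<^sup>*}"

definition comps :: "('e \<Rightarrow> 'v set) \<Rightarrow> 'v set \<Rightarrow> 'e set \<Rightarrow> ('v set \<times> 'e set) set" where
  "comps ends U A = (\<lambda>C. (C, {e\<in>A. ends e \<subseteq> C})) ` (U // connrel ends U A)"

definition conn_subgraph :: "'v set \<Rightarrow> 'e set \<Rightarrow> ('e \<Rightarrow> 'v set) \<Rightarrow> 'v set \<times> 'e set \<Rightarrow> bool" where
  "conn_subgraph V E ends C \<longleftrightarrow> fst C \<noteq> {} \<and> fst C \<subseteq> V \<and> snd C \<subseteq> E \<and>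
     (\<forall>e\<in>snd C. ends e \<subseteq> fst C) \<and>
     (\<forall>x\<in>fst C. \<forall>y\<in>fst C. (x, y) \<in> (adjrel ends (snd C))\<^sup>*)"

definition phi_w :: "('e \<Rightarrow> 'v set) \<Rightarrow> ('v set \<times> 'e set \<Rightarrow> real) \<Rightarrow> 'v set \<times> 'e set \<Rightarrow> 'e set \<Rightarrow> real" where
  "phi_w ends W H A = (\<Prod>C\<in>comps ends (fst H) A. W C)"

definition phi :: "('e \<Rightarrow> 'v set) \<Rightarrow> ('v set \<times> 'e set \<Rightarrow> real) \<Rightarrow> 'v set \<times> 'e set \<Rightarrow> 'e set \<Rightarrow> real" where
  "phi ends W H A = phi_w ends W H A / (\<Sum>B\<in>Pow (snd H). phi_w ends W H B)"

definition Delta :: "('e \<Rightarrow> 'v set) \<Rightarrow> 'e set \<Rightarrow> ('v \<Rightarrow> colour) \<Rightarrow> bool" where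
  "Delta ends A \<sigma> \<longleftrightarrow> (\<forall>e\<in>A. \<forall>x\<in>ends e. \<forall>y\<in>ends e. \<sigma> x = \<sigma> y)"

definition col_of :: "('v \<Rightarrow> colour) \<Rightarrow> 'v set \<times> 'e set \<Rightarrow> colour" where
  "col_of \<sigma> C = \<sigma> (SOME v. v \<in> fst C)"

definition Wc :: "('v set \<times> 'e set \<Rightarrow> real) \<Rightarrow> ('v set \<times> 'e set \<Rightarrow> real) \<Rightarrow> colour \<Rightarrow> 'v set \<times> 'e set \<Rightarrow> real" where
  "Wc W Wh c C = (case c of Red \<Rightarrow> Wh C | Blue \<Rightarrow> W C - Wh C)"

definition colourings :: "'v set \<Rightarrow> ('v \<Rightarrow> colour) set" where
  "colourings V = V \<rightarrow>\<^sub>E (UNIV :: colour set)"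

definition states :: "'v set \<Rightarrow> 'e set \<Rightarrow> ('e set \<times> ('v \<Rightarrow> colour)) set" where
  "states V E = Pow E \<times> colourings V"

definition mu_w :: "'v set \<Rightarrow> ('e \<Rightarrow> 'v set) \<Rightarrow> ('v set \<times> 'e set \<Rightarrow> real) \<Rightarrow> ('v set \<times> 'e set \<Rightarrow> real)
    \<Rightarrow> 'e set \<times> ('v \<Rightarrow> colour) \<Rightarrow> real" where
  "mu_w V ends W Wh x = (if Delta ends (fst x) (snd x)
      then (\<Prod>C\<in>comps ends V (fst x). Wc W Wh (col_of (snd x) C) C) else 0)"

definition mu :: "'v set \<Rightarrow> 'e set \<Rightarrow> ('e \<Rightarrow> 'v set) \<Rightarrow> ('v set \<times> 'e set \<Rightarrow> real) \<Rightarrow> ('v set \<times> 'e set \<Rightarrow> real)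
    \<Rightarrow> 'e set \<times> ('v \<Rightarrow> colour) \<Rightarrow> real" where
  "mu V E ends W Wh x = mu_w V ends W Wh x / (\<Sum>y\<in>states V E. mu_w V ends W Wh y)"

definition supp_mu :: "'v set \<Rightarrow> 'e set \<Rightarrow> ('e \<Rightarrow> 'v set) \<Rightarrow> ('v set \<times> 'e set \<Rightarrow> real) \<Rightarrow> ('v set \<times> 'e set \<Rightarrow> real)
    \<Rightarrow> ('e set \<times> ('v \<Rightarrow> colour)) set" where
  "supp_mu V E ends W Wh = {x \<in> states V E. mu V E ends W Wh x > 0}"

definition col_verts :: "'v set \<Rightarrow> ('v \<Rightarrow> colour) \<Rightarrow> colour \<Rightarrow> 'v set" where
  "col_verts V \<sigma> c = {v \<in> V. \<sigma> v = c}"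

definition induced :: "'e set \<Rightarrow> ('e \<Rightarrow> 'v set) \<Rightarrow> 'v set \<Rightarrow> 'v set \<times> 'e set" where
  "induced E ends U = (U, {e \<in> E. ends e \<subseteq> U})"

definition G_red :: "'v set \<Rightarrow> 'e set \<Rightarrow> ('e \<Rightarrow> 'v set) \<Rightarrow> ('v \<Rightarrow> colour) \<Rightarrow> 'v set \<times> 'e set" where
  "G_red V E ends \<sigma> = induced E ends (col_verts V \<sigma> Red)"

definition G_blue :: "'v set \<Rightarrow> 'e set \<Rightarrow> ('e \<Rightarrow> 'v set) \<Rightarrow> ('v \<Rightarrow> colour) \<Rightarrow> 'v set \<times> 'e set" where
  "G_blue V E ends \<sigma> = induced E ends (col_verts V \<sigma> Blue)"

definition transition_matrix :: "'s set \<Rightarrow> ('s \<Rightarrow> 's \<Rightarrow> real) \<Rightarrow> bool" where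
  "transition_matrix S P \<longleftrightarrow> (\<forall>x\<in>S. \<forall>y\<in>S. P x y \<ge> 0) \<and> (\<forall>x\<in>S. (\<Sum>y\<in>S. P x y) = 1)"

definition stationary :: "'s set \<Rightarrow> ('s \<Rightarrow> 's \<Rightarrow> real) \<Rightarrow> ('s \<Rightarrow> real) \<Rightarrow> bool" where
  "stationary S P p \<longleftrightarrow> (\<forall>y\<in>S. (\<Sum>x\<in>S. p x * P x y) = p y)"

text \<open>Ergodic (= irreducible) on S: every state of S reaches every state of S through
  positive-probability transitions between states of S.\<close>
definition irreducible_on :: "'s set \<Rightarrow> ('s \<Rightarrow> 's \<Rightarrow> real) \<Rightarrow> bool" where
  "irreducible_on S P \<longleftrightarrow>
     (\<forall>x\<in>S. \<forall>y\<in>S. (x, y) \<in> {(a, b). a \<in> S \<and> b \<in> S \<and> P a b > 0}\<^sup>*)"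

definition matmul :: "'s set \<Rightarrow> ('s \<Rightarrow> 's \<Rightarrow> real) \<Rightarrow> ('s \<Rightarrow> 's \<Rightarrow> real) \<Rightarrow> 's \<Rightarrow> 's \<Rightarrow> real" where
  "matmul S P Q x z = (\<Sum>y\<in>S. P x y * Q y z)"

definition P_colour :: "'v set \<Rightarrow> ('e \<Rightarrow> 'v set) \<Rightarrow> ('v set \<times> 'e set \<Rightarrow> real) \<Rightarrow> ('v set \<times> 'e set \<Rightarrow> real)
    \<Rightarrow> 'e set \<times> ('v \<Rightarrow> colour) \<Rightarrow> 'e set \<times> ('v \<Rightarrow> colour) \<Rightarrow> real" where
  "P_colour V ends W Wh x x' =
     (if fst x = fst x' \<and> Delta ends (fst x) (snd x')
      then (\<Prod>C\<in>comps ends V (fst x). Wc W Wh (col_of (snd x') C) C / W C) else 0)"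

definition P_bond :: "'v set \<Rightarrow> 'e set \<Rightarrow> ('e \<Rightarrow> 'v set) \<Rightarrow> ('v set \<times> 'e set \<Rightarrow> 'e set \<Rightarrow> 'e set \<Rightarrow> real)
    \<Rightarrow> 'e set \<times> ('v \<Rightarrow> colour) \<Rightarrow> 'e set \<times> ('v \<Rightarrow> colour) \<Rightarrow> real" where
  "P_bond V E ends Pm x x' =
     (let \<sigma> = snd x; A = fst x; A' = fst x'; Er = snd (G_red V E ends \<sigma>); Eb = snd (G_blue V E ends \<sigma>)
      in if \<sigma> = snd x' \<and> Delta ends A' \<sigma> \<and> A \<inter> Eb = A' \<inter> Eb
         then Pm (G_red V E ends \<sigma>) (A \<inter> Er) (A' \<inter> Er) else 0)"

end

theory Submission
  imports Defs "HOL-Library.FuncSet"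
begin


lemma adjrel_sym: "(x,y) \<in> adjrel ends A \<Longrightarrow> (y,x) \<in> adjrel ends A"
  unfolding adjrel_def by auto

lemma adjrel_mono: "A \<subseteq> B \<Longrightarrow> adjrel ends A \<subseteq> adjrel ends B"
  unfolding adjrel_def by auto

lemma sym_adjrel: "sym (adjrel ends A)"
  by (meson adjrel_sym symI)

lemma adj_rtrancl_sym: "(x,y) \<in> (adjrel ends A)\<^sup>* \<Longrightarrow> (y,x) \<in> (adjrel ends A)\<^sup>*"
  by (meson sym_adjrel sym_rtrancl symD)

lemma equiv_connrel: "equiv U (connrel ends U A)"
  unfolding equiv_def refl_on_def sym_def trans_def connrel_def
  by (auto intro: adj_rtrancl_sym rtrancl_trans)

lemma path_in_class:
  assumes edges: "\<forall>e\<in>A. ends e \<subseteq> U" and x: "x \<in> U"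
    and p: "(x,y) \<in> (adjrel ends A)\<^sup>*"
  shows "y \<in> U \<and> (x,y) \<in> (adjrel ends {e\<in>A. ends e \<subseteq> connrel ends U A `` {x}})\<^sup>*"
  using p
proof (induction rule: rtrancl_induct)
  case base
  then show ?case using x by auto
next
  case (step y z)
  from step(2) obtain e where e: "e \<in> A" "y \<in> ends e" "z \<in> ends e"
    unfolding adjrel_def by auto
  have sub: "ends e \<subseteq> connrel ends U A `` {x}"
  proof
    fix w assume w: "w \<in> ends e"
    have "(y,w) \<in> adjrel ends A" using e w unfolding adjrel_def by auto
    then have "(x,w) \<in> (adjrel ends A)\<^sup>*" using step(1) by (meson rtrancl.rtrancl_into_rtrancl)
    moreover have "w \<in> U" using edges e w by auto
    ultimately show "w \<in> connrel ends U A `` {x}" using x unfolding connrel_def by auto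
  qed
  have "(y,z) \<in> adjrel ends {e\<in>A. ends e \<subseteq> connrel ends U A `` {x}}"
    using e sub unfolding adjrel_def by auto
  then show ?case using step(3) edges e by (meson rtrancl.rtrancl_into_rtrancl subsetD)
qed

lemma comps_conn:
  assumes "U \<subseteq> V" "A \<subseteq> E" "\<forall>e\<in>A. ends e \<subseteq> U" "C \<in> comps ends U A"
  shows "conn_subgraph V E ends C"
proof -
  obtain x where x: "x \<in> U" and C: "C = (connrel ends U A `` {x}, {e\<in>A. ends e \<subseteq> connrel ends U A `` {x}})"
    using assms(4) unfolding comps_def quotient_def by auto
  let ?K = "connrel ends U A `` {x}"
  have xK: "x \<in> ?K" using x unfolding connrel_def by auto
  have KU: "?K \<subseteq> U" unfolding connrel_def by auto
  have conn: "(y, y') \<in> (adjrel ends {e\<in>A. ends e \<subseteq> ?K})\<^sup>*" if "y \<in> ?K" "y' \<in> ?K" for y y'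
  proof -
    have "(x,y) \<in> (adjrel ends A)\<^sup>*" "(x,y') \<in> (adjrel ends A)\<^sup>*" using that unfolding connrel_def by auto
    then have "(x,y) \<in> (adjrel ends {e\<in>A. ends e \<subseteq> ?K})\<^sup>*" "(x,y') \<in> (adjrel ends {e\<in>A. ends e \<subseteq> ?K})\<^sup>*"
      using path_in_class[OF assms(3) x] by auto
    then show ?thesis by (meson adj_rtrancl_sym rtrancl_trans)
  qed
  show ?thesis unfolding conn_subgraph_def C using xK KU assms(1,2) conn by auto
qed

lemma finite_comps: "finite U \<Longrightarrow> finite (comps ends U A)"
  unfolding comps_def quotient_def by auto

lemma comps_fst_ne: "C \<in> comps ends U A \<Longrightarrow> fst C \<noteq> {} \<and> fst C \<subseteq> U"
  unfolding comps_def quotient_def connrel_def by auto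



definition Ec :: "'v set \<Rightarrow> 'e set \<Rightarrow> ('e \<Rightarrow> 'v set) \<Rightarrow> ('v \<Rightarrow> colour) \<Rightarrow> colour \<Rightarrow> 'e set" where
  "Ec V E ends \<tau> c = {e\<in>E. ends e \<subseteq> col_verts V \<tau> c}"

lemma graph_ends: "finite_graph V E ends \<Longrightarrow> e \<in> E \<Longrightarrow> ends e \<subseteq> V"
  unfolding finite_graph_def by blast

lemma graph_ends_ne: "finite_graph V E ends \<Longrightarrow> e \<in> E \<Longrightarrow> ends e \<noteq> {}"
  unfolding finite_graph_def by fastforce

lemma graph_fin: "finite_graph V E ends \<Longrightarrow> finite V \<and> finite E"
  unfolding finite_graph_def by blast

lemma path_colour:
  assumes g: "finite_graph V E ends" and AE: "A \<subseteq> E" and D: "Delta ends A \<tau>" and x: "x \<in> V"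
    and p: "(x,y) \<in> (adjrel ends A)\<^sup>*"
  shows "y \<in> V \<and> \<tau> y = \<tau> x \<and> (x,y) \<in> (adjrel ends (A \<inter> Ec V E ends \<tau> (\<tau> x)))\<^sup>*"
  using p
proof (induction rule: rtrancl_induct)
  case base
  then show ?case using x by auto
next
  case (step y z)
  from step(2) obtain e where e: "e \<in> A" "y \<in> ends e" "z \<in> ends e"
    unfolding adjrel_def by auto
  have eV: "ends e \<subseteq> V" using g AE e(1) by (auto dest: graph_ends)
  have col: "\<forall>w\<in>ends e. \<tau> w = \<tau> y" using D e unfolding Delta_def by blast
  have ty: "\<tau> y = \<tau> x" using step(3) by simp
  have "ends e \<subseteq> col_verts V \<tau> (\<tau> x)" unfolding col_verts_def using eV col ty by auto
  then have "e \<in> Ec V E ends \<tau> (\<tau> x)" using AE e(1) unfolding Ec_def by auto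
  then have "(y,z) \<in> adjrel ends (A \<inter> Ec V E ends \<tau> (\<tau> x))" using e unfolding adjrel_def by auto
  moreover have "(x,y) \<in> (adjrel ends (A \<inter> Ec V E ends \<tau> (\<tau> x)))\<^sup>*" using step(3) by simp
  ultimately have "(x,z) \<in> (adjrel ends (A \<inter> Ec V E ends \<tau> (\<tau> x)))\<^sup>*" by (meson rtrancl.rtrancl_into_rtrancl)
  moreover have "z \<in> V" using eV e by auto
  moreover have "\<tau> z = \<tau> x" using col e ty by metis
  ultimately show ?case by simp
qed

lemma Ec_sub: "Ec V E ends \<tau> c \<subseteq> E" unfolding Ec_def by auto

lemma class_colour:
  assumes g: "finite_graph V E ends" and AE: "A \<subseteq> E" and D: "Delta ends A \<tau>" and x: "x \<in> V"
  shows "connrel ends V A `` {x} = connrel ends (col_verts V \<tau> (\<tau> x)) (A \<inter> Ec V E ends \<tau> (\<tau> x)) `` {x}"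
proof
  show "connrel ends V A `` {x} \<subseteq> connrel ends (col_verts V \<tau> (\<tau> x)) (A \<inter> Ec V E ends \<tau> (\<tau> x)) `` {x}"
  proof
    fix y assume "y \<in> connrel ends V A `` {x}"
    then have "(x,y) \<in> (adjrel ends A)\<^sup>*" unfolding connrel_def by auto
    from path_colour[OF g AE D x this] have
      "y \<in> V" "\<tau> y = \<tau> x" "(x,y) \<in> (adjrel ends (A \<inter> Ec V E ends \<tau> (\<tau> x)))\<^sup>*" by auto
    moreover have "x \<in> col_verts V \<tau> (\<tau> x)" using x unfolding col_verts_def by simp
    moreover have "y \<in> col_verts V \<tau> (\<tau> x)" using calculation unfolding col_verts_def by simp
    ultimately show "y \<in> connrel ends (col_verts V \<tau> (\<tau> x)) (A \<inter> Ec V E ends \<tau> (\<tau> x)) `` {x}"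
      unfolding connrel_def by simp
  qed
next
  have m: "(adjrel ends (A \<inter> Ec V E ends \<tau> (\<tau> x)))\<^sup>* \<subseteq> (adjrel ends A)\<^sup>*"
    by (intro rtrancl_mono adjrel_mono) auto
  show "connrel ends (col_verts V \<tau> (\<tau> x)) (A \<inter> Ec V E ends \<tau> (\<tau> x)) `` {x} \<subseteq> connrel ends V A `` {x}"
    using m unfolding connrel_def col_verts_def by auto
qed

lemma quotient_img: "U // r = (\<lambda>x. r `` {x}) ` U"
  unfolding quotient_def by auto

lemma comps_split:
  assumes g: "finite_graph V E ends" and AE: "A \<subseteq> E" and D: "Delta ends A \<tau>"
  shows "comps ends V A = comps ends (col_verts V \<tau> Red) (A \<inter> Ec V E ends \<tau> Red)
             \<union> comps ends (col_verts V \<tau> Blue) (A \<inter> Ec V E ends \<tau> Blue)"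
proof -
  have V: "V = col_verts V \<tau> Red \<union> col_verts V \<tau> Blue"
    unfolding col_verts_def using colour.exhaust by auto
  have q: "V // connrel ends V A = col_verts V \<tau> Red // connrel ends (col_verts V \<tau> Red) (A \<inter> Ec V E ends \<tau> Red)
     \<union> col_verts V \<tau> Blue // connrel ends (col_verts V \<tau> Blue) (A \<inter> Ec V E ends \<tau> Blue)"
  proof -
    have "V // connrel ends V A = (\<lambda>x. connrel ends V A `` {x}) ` col_verts V \<tau> Red \<union> (\<lambda>x. connrel ends V A `` {x}) ` col_verts V \<tau> Blue"
      unfolding quotient_img using V by blast
    also have "(\<lambda>x. connrel ends V A `` {x}) ` col_verts V \<tau> Red = col_verts V \<tau> Red // connrel ends (col_verts V \<tau> Red) (A \<inter> Ec V E ends \<tau> Red)"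
      unfolding quotient_img
    proof (rule image_cong)
      fix x assume "x \<in> col_verts V \<tau> Red"
      then have "x \<in> V" "\<tau> x = Red" unfolding col_verts_def by auto
      then show "connrel ends V A `` {x} = connrel ends (col_verts V \<tau> Red) (A \<inter> Ec V E ends \<tau> Red) `` {x}"
        using class_colour[OF g AE D, of x] by simp
    qed simp
    also have "(\<lambda>x. connrel ends V A `` {x}) ` col_verts V \<tau> Blue = col_verts V \<tau> Blue // connrel ends (col_verts V \<tau> Blue) (A \<inter> Ec V E ends \<tau> Blue)"
      unfolding quotient_img
    proof (rule image_cong)
      fix x assume "x \<in> col_verts V \<tau> Blue"
      then have "x \<in> V" "\<tau> x = Blue" unfolding col_verts_def by auto
      then show "connrel ends V A `` {x} = connrel ends (col_verts V \<tau> Blue) (A \<inter> Ec V E ends \<tau> Blue) `` {x}"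
        using class_colour[OF g AE D, of x] by simp
    qed simp
    finally show ?thesis .
  qed
  have ed: "{e\<in>A. ends e \<subseteq> C} = {e\<in>A \<inter> Ec V E ends \<tau> c. ends e \<subseteq> C}"
    if "C \<in> col_verts V \<tau> c // connrel ends (col_verts V \<tau> c) (A \<inter> Ec V E ends \<tau> c)" for C c
  proof -
    have "C \<subseteq> col_verts V \<tau> c" using that unfolding quotient_def connrel_def by auto
    then show ?thesis using AE unfolding Ec_def by auto
  qed
  show ?thesis unfolding comps_def q image_Un
  proof (intro arg_cong2[where f="(\<union>)"] image_cong refl)
    fix C assume "C \<in> col_verts V \<tau> Red // connrel ends (col_verts V \<tau> Red) (A \<inter> Ec V E ends \<tau> Red)"
    then show "(C, {e \<in> A. ends e \<subseteq> C}) = (C, {e \<in> A \<inter> Ec V E ends \<tau> Red. ends e \<subseteq> C})" using ed by simp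
  next
    fix C assume "C \<in> col_verts V \<tau> Blue // connrel ends (col_verts V \<tau> Blue) (A \<inter> Ec V E ends \<tau> Blue)"
    then show "(C, {e \<in> A. ends e \<subseteq> C}) = (C, {e \<in> A \<inter> Ec V E ends \<tau> Blue. ends e \<subseteq> C})" using ed by simp
  qed
qed

lemma comps_disj:
  "comps ends (col_verts V \<tau> Red) X \<inter> comps ends (col_verts V \<tau> Blue) Y = {}"
proof -
  { fix C assume "C \<in> comps ends (col_verts V \<tau> Red) X" "C \<in> comps ends (col_verts V \<tau> Blue) Y"
    then have "fst C \<noteq> {}" "fst C \<subseteq> col_verts V \<tau> Red" "fst C \<subseteq> col_verts V \<tau> Blue"
      using comps_fst_ne by blast+
    then have False unfolding col_verts_def by fastforce }
  then show ?thesis by blast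
qed

lemma col_of_comp:
  "C \<in> comps ends (col_verts V \<tau> c) X \<Longrightarrow> col_of \<tau> C = c"
  using comps_fst_ne[of C ends "col_verts V \<tau> c" X] unfolding col_of_def col_verts_def
  by (metis (mono_tags, lifting) ex_in_conv mem_Collect_eq someI_ex subsetD)

lemma G_red_eq: "G_red V E ends \<tau> = (col_verts V \<tau> Red, Ec V E ends \<tau> Red)"
  unfolding G_red_def induced_def Ec_def by auto
lemma G_blue_eq: "G_blue V E ends \<tau> = (col_verts V \<tau> Blue, Ec V E ends \<tau> Blue)"
  unfolding G_blue_def induced_def Ec_def by auto

definition Qb where
  "Qb V ends W Wh \<tau> b = (\<Prod>C\<in>comps ends (col_verts V \<tau> Blue) b. W C - Wh C)"

lemma mu_w_split:
  assumes g: "finite_graph V E ends" and AE: "A \<subseteq> E" and D: "Delta ends A \<tau>"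
  shows "mu_w V ends W Wh (A, \<tau>) = phi_w ends Wh (G_red V E ends \<tau>) (A \<inter> Ec V E ends \<tau> Red)
      * Qb V ends W Wh \<tau> (A \<inter> Ec V E ends \<tau> Blue)"
proof -
  have fin: "finite (col_verts V \<tau> c)" for c using g unfolding finite_graph_def col_verts_def by auto
  have "mu_w V ends W Wh (A, \<tau>) = (\<Prod>C\<in>comps ends V A. Wc W Wh (col_of \<tau> C) C)"
    using D unfolding mu_w_def by simp
  also have "\<dots> = (\<Prod>C\<in>comps ends (col_verts V \<tau> Red) (A \<inter> Ec V E ends \<tau> Red). Wc W Wh (col_of \<tau> C) C)
     * (\<Prod>C\<in>comps ends (col_verts V \<tau> Blue) (A \<inter> Ec V E ends \<tau> Blue). Wc W Wh (col_of \<tau> C) C)"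
    unfolding comps_split[OF g AE D]
    by (rule prod.union_disjoint) (auto simp: finite_comps fin comps_disj)
  also have "\<dots> = phi_w ends Wh (G_red V E ends \<tau>) (A \<inter> Ec V E ends \<tau> Red)
      * Qb V ends W Wh \<tau> (A \<inter> Ec V E ends \<tau> Blue)"
    unfolding phi_w_def Qb_def G_red_eq fst_conv
    by (intro arg_cong2[where f="(*)"] prod.cong) (auto simp: col_of_comp Wc_def)
  finally show ?thesis .
qed



lemma UNIV_colour: "(UNIV :: colour set) = {Red, Blue}"
  using colour.exhaust by auto

lemma finite_colourings: "finite V \<Longrightarrow> finite (colourings V)"
  unfolding colourings_def by (intro finite_PiE) (auto simp: UNIV_colour)

lemma const_on_path:
  assumes g: "finite_graph V E ends" and AE: "A \<subseteq> E" and D: "Delta ends A \<sigma>" and x: "x \<in> V"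
    and p: "(x,y) \<in> (adjrel ends A)\<^sup>*"
  shows "\<sigma> y = \<sigma> x"
  using path_colour[OF g AE D x p] by blast

lemma colour_sum:
  fixes g :: "colour \<Rightarrow> 'v set \<times> 'e set \<Rightarrow> real"
  assumes gr: "finite_graph V E ends" and AE: "A \<subseteq> E"
  shows "(\<Sum>\<sigma>\<in>{\<sigma>\<in>colourings V. Delta ends A \<sigma>}. \<Prod>C\<in>comps ends V A. g (col_of \<sigma> C) C)
       = (\<Prod>C\<in>comps ends V A. g Red C + g Blue C)"
proof -
  let ?r = "connrel ends V A"
  let ?K = "V // ?r"
  let ?ed = "\<lambda>K. {e\<in>A. ends e \<subseteq> K}"
  let ?D = "{\<sigma>\<in>colourings V. Delta ends A \<sigma>}"
  have eq: "equiv V ?r" by (rule equiv_connrel)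
  have finV: "finite V" using graph_fin[OF gr] by blast
  have finK: "finite ?K" using finV unfolding quotient_img by simp
  have injK: "inj_on (\<lambda>K. (K, ?ed K)) ?K" by (rule inj_onI) auto
  have prodK: "(\<Prod>C\<in>comps ends V A. h C) = (\<Prod>K\<in>?K. h (K, ?ed K))" for h :: "_ \<Rightarrow> real"
    unfolding comps_def by (rule prod.reindex[OF injK, unfolded comp_def])
  define \<Phi> where "\<Phi> \<sigma> = restrict (\<lambda>K. \<sigma> (SOME v. v \<in> K)) ?K" for \<sigma> :: "'v \<Rightarrow> colour"
  define \<Psi> where "\<Psi> h = restrict (\<lambda>v. h (?r `` {v})) V" for h :: "'v set \<Rightarrow> colour"
  have clsV: "K \<subseteq> V" "K \<noteq> {}" if "K \<in> ?K" for K
    using that unfolding quotient_def connrel_def by auto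
  have some_in: "(SOME v. v \<in> K) \<in> K" if "K \<in> ?K" for K
    using clsV[OF that] by (meson ex_in_conv someI_ex)
  have cls_of_mem: "?r `` {w} = K" if KK: "K \<in> ?K" and wK: "w \<in> K" for K w
  proof -
    obtain v where v: "v \<in> V" "K = ?r `` {v}" using KK by (rule quotientE)
    then have "(v, w) \<in> ?r" using wK by auto
    then show ?thesis using eq v by (metis equiv_class_eq_iff)
  qed
  have bij: "bij_betw \<Phi> ?D (?K \<rightarrow>\<^sub>E UNIV)"
  proof (rule bij_betw_byWitness[where f'=\<Psi>])
    show "\<forall>\<sigma>\<in>?D. \<Psi> (\<Phi> \<sigma>) = \<sigma>"
    proof
      fix \<sigma> assume s: "\<sigma> \<in> ?D"
      have ext: "\<sigma> \<in> extensional V" using s unfolding colourings_def by (auto simp: PiE_def)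
      show "\<Psi> (\<Phi> \<sigma>) = \<sigma>"
      proof (rule extensionalityI[OF _ ext])
        show "\<Psi> (\<Phi> \<sigma>) \<in> extensional V" unfolding \<Psi>_def by simp
        fix v assume v: "v \<in> V"
        have Kin: "?r `` {v} \<in> ?K" using v unfolding quotient_def by auto
        have "(SOME w. w \<in> ?r `` {v}) \<in> ?r `` {v}" by (rule some_in[OF Kin])
        then have "(v, SOME w. w \<in> ?r `` {v}) \<in> (adjrel ends A)\<^sup>*" unfolding connrel_def by auto
        then have "\<sigma> (SOME w. w \<in> ?r `` {v}) = \<sigma> v"
          using const_on_path[OF gr AE _ v] s by blast
        then show "\<Psi> (\<Phi> \<sigma>) v = \<sigma> v" unfolding \<Psi>_def \<Phi>_def using v Kin by simp
      qed
    qed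
  next
    show "\<forall>h\<in>?K \<rightarrow>\<^sub>E UNIV. \<Phi> (\<Psi> h) = h"
    proof
      fix h :: "'v set \<Rightarrow> colour" assume h: "h \<in> ?K \<rightarrow>\<^sub>E UNIV"
      have ext: "h \<in> extensional ?K" using h by (auto simp: PiE_def)
      show "\<Phi> (\<Psi> h) = h"
      proof (rule extensionalityI[OF _ ext])
        show "\<Phi> (\<Psi> h) \<in> extensional ?K" unfolding \<Phi>_def by simp
        fix K assume K: "K \<in> ?K"
        have w: "(SOME v. v \<in> K) \<in> K" by (rule some_in[OF K])
        then have "(SOME v. v \<in> K) \<in> V" using clsV[OF K] by auto
        then show "\<Phi> (\<Psi> h) K = h K" unfolding \<Phi>_def \<Psi>_def using K w cls_of_mem[OF K w] by simp
      qed
    qed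
  next
    show "\<Phi> ` ?D \<subseteq> ?K \<rightarrow>\<^sub>E UNIV" unfolding \<Phi>_def by auto
  next
    show "\<Psi> ` (?K \<rightarrow>\<^sub>E UNIV) \<subseteq> ?D"
    proof
      fix s assume "s \<in> \<Psi> ` (?K \<rightarrow>\<^sub>E UNIV)"
      then obtain h where s: "s = \<Psi> h" by auto
      have "s \<in> colourings V" unfolding s \<Psi>_def colourings_def by auto
      moreover have "Delta ends A s" unfolding Delta_def
      proof (intro ballI)
        fix e x y assume e: "e \<in> A" "x \<in> ends e" "y \<in> ends e"
        have eV: "ends e \<subseteq> V" using AE e(1) graph_ends[OF gr] by blast
        have "(x, y) \<in> adjrel ends A" using e unfolding adjrel_def by auto
        then have "(x, y) \<in> ?r" using eV e unfolding connrel_def by auto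
        then have "?r `` {x} = ?r `` {y}" using eq by (metis equiv_class_eq_iff)
        then show "s x = s y" unfolding s \<Psi>_def using eV e by auto
      qed
      ultimately show "s \<in> ?D" by simp
    qed
  qed
  have colK: "col_of \<sigma> (K, ?ed K) = \<Phi> \<sigma> K" if "K \<in> ?K" for \<sigma> K
    unfolding col_of_def \<Phi>_def using that by simp
  have "(\<Sum>\<sigma>\<in>?D. \<Prod>C\<in>comps ends V A. g (col_of \<sigma> C) C)
      = (\<Sum>\<sigma>\<in>?D. \<Prod>K\<in>?K. g (\<Phi> \<sigma> K) (K, ?ed K))"
    unfolding prodK by (intro sum.cong prod.cong refl) (simp add: colK)
  also have "\<dots> = (\<Sum>h\<in>?K \<rightarrow>\<^sub>E UNIV. \<Prod>K\<in>?K. g (h K) (K, ?ed K))"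
    by (rule sum.reindex_bij_betw[OF bij])
  also have "\<dots> = (\<Prod>K\<in>?K. \<Sum>c\<in>UNIV. g c (K, ?ed K))"
    by (rule prod_sum_PiE[symmetric]) (auto simp: finK UNIV_colour)
  also have "\<dots> = (\<Prod>K\<in>?K. g Red (K, ?ed K) + g Blue (K, ?ed K))"
    by (simp add: UNIV_colour)
  also have "\<dots> = (\<Prod>C\<in>comps ends V A. g Red C + g Blue C)"
    unfolding prodK ..
  finally show ?thesis .
qed



locale setting =
  fixes V :: "'v set" and E :: "'e set" and ends :: "'e \<Rightarrow> 'v set"
    and W Wh :: "'v set \<times> 'e set \<Rightarrow> real"
  assumes graph: "finite_graph V E ends"
    and weights: "\<And>C. conn_subgraph V E ends C \<Longrightarrow>
        W C \<ge> 0 \<and> Wh C \<ge> 0 \<and> (W C = 0 \<longrightarrow> Wh C = 0) \<and> (W C > 0 \<longrightarrow> 0 < Wh C \<and> Wh C < W C)"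
begin

abbreviation S where "S \<equiv> supp_mu V E ends W Wh"
abbreviation mw where "mw \<equiv> mu_w V ends W Wh"
abbreviation m where "m \<equiv> mu V E ends W Wh"
definition Z where "Z = (\<Sum>y\<in>states V E. mu_w V ends W Wh y)"

lemma finV: "finite V" and finE: "finite E" using graph_fin[OF graph] by auto

lemma fin_states: "finite (states V E)"
  unfolding states_def using finV finE finite_colourings by auto

lemma ends_V: "e \<in> E \<Longrightarrow> ends e \<subseteq> V" using graph_ends[OF graph] .

lemma Wc_nonneg: "conn_subgraph V E ends C \<Longrightarrow> 0 \<le> Wc W Wh c C"
  using weights[of C] by (cases c) (auto simp: Wc_def)

lemma Wc_sum: "Wc W Wh Red C + Wc W Wh Blue C = W C"
  by (simp add: Wc_def)

lemma W_nonneg: "conn_subgraph V E ends C \<Longrightarrow> 0 \<le> W C"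
  using weights[of C] by auto

lemma Wc_pos_W: "conn_subgraph V E ends C \<Longrightarrow> 0 < Wc W Wh c C \<Longrightarrow> 0 < W C"
  using weights[of C] by (cases c) (auto simp: Wc_def)

lemma W_pos_Wc: "conn_subgraph V E ends C \<Longrightarrow> 0 < W C \<Longrightarrow> 0 < Wc W Wh c C"
  using weights[of C] by (cases c) (auto simp: Wc_def)

lemma conn_V: "A \<subseteq> E \<Longrightarrow> C \<in> comps ends V A \<Longrightarrow> conn_subgraph V E ends C"
  by (rule comps_conn[of V V A E]) (use ends_V in auto)

lemma conn_col: "a \<subseteq> Ec V E ends \<tau> c \<Longrightarrow> C \<in> comps ends (col_verts V \<tau> c) a \<Longrightarrow> conn_subgraph V E ends C"
  by (rule comps_conn[of "col_verts V \<tau> c" V a E]) (auto simp: Ec_def col_verts_def)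

lemma mw_nonneg: "fst x \<subseteq> E \<Longrightarrow> 0 \<le> mw x"
  unfolding mu_w_def using conn_V Wc_nonneg by (auto intro!: prod_nonneg)

lemma Z_nonneg: "0 \<le> Z"
  unfolding Z_def states_def by (rule sum_nonneg) (auto intro!: mw_nonneg)

lemma m_eq: "m x = mw x / Z" unfolding mu_def Z_def ..

lemma m_nonneg: "fst x \<subseteq> E \<Longrightarrow> 0 \<le> m x"
  unfolding m_eq using mw_nonneg Z_nonneg by simp

lemma supp_iff: "x \<in> S \<longleftrightarrow> x \<in> states V E \<and> 0 < mw x \<and> 0 < Z"
proof -
  have "x \<in> states V E \<Longrightarrow> 0 \<le> mw x" using mw_nonneg unfolding states_def by auto
  then show ?thesis unfolding supp_mu_def m_eq using Z_nonneg
    by (auto simp: zero_less_divide_iff)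
qed

lemma not_supp_zero: "x \<in> states V E \<Longrightarrow> x \<notin> S \<Longrightarrow> m x = 0"
  using m_nonneg[of x] unfolding supp_mu_def states_def by force

lemma states_iff: "(A, \<sigma>) \<in> states V E \<longleftrightarrow> A \<subseteq> E \<and> \<sigma> \<in> colourings V"
  unfolding states_def by auto

lemma supp_props:
  assumes "(A, \<sigma>) \<in> S"
  shows "A \<subseteq> E" "\<sigma> \<in> colourings V" "Delta ends A \<sigma>" "0 < Z"
    "\<And>C. C \<in> comps ends V A \<Longrightarrow> 0 < W C \<and> 0 < Wc W Wh (col_of \<sigma> C) C"
proof -
  have st: "(A, \<sigma>) \<in> states V E" and pos: "0 < mw (A, \<sigma>)" and "0 < Z" using assms supp_iff by auto
  then show "A \<subseteq> E" "\<sigma> \<in> colourings V" "0 < Z" by (auto simp: states_iff)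
  show D: "Delta ends A \<sigma>" using pos unfolding mu_w_def by (auto split: if_splits)
  fix C assume C: "C \<in> comps ends V A"
  have cn: "conn_subgraph V E ends C" using conn_V[OF _ C] st by (auto simp: states_iff)
  have p: "0 < (\<Prod>C\<in>comps ends V A. Wc W Wh (col_of \<sigma> C) C)" using pos D unfolding mu_w_def by simp
  have "Wc W Wh (col_of \<sigma> C) C \<noteq> 0"
  proof
    assume "Wc W Wh (col_of \<sigma> C) C = 0"
    then have "(\<Prod>C\<in>comps ends V A. Wc W Wh (col_of \<sigma> C) C) = 0"
      using C finite_comps[OF finV] by (meson prod_zero_iff)
    then show False using p by simp
  qed
  then have "0 < Wc W Wh (col_of \<sigma> C) C" using Wc_nonneg[OF cn] by (simp add: order_less_le)
  then show "0 < W C \<and> 0 < Wc W Wh (col_of \<sigma> C) C" using Wc_pos_W[OF cn] by blast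
qed

definition red :: "'v \<Rightarrow> colour" where "red = (\<lambda>v\<in>V. Red)"

lemma red_col: "red \<in> colourings V" unfolding red_def colourings_def by auto

lemma Delta_red: "A \<subseteq> E \<Longrightarrow> Delta ends A red"
  unfolding Delta_def red_def using ends_V by (auto simp: subset_iff)

lemma col_verts_red: "col_verts V red Red = V" "col_verts V red Blue = {}"
  unfolding col_verts_def red_def by auto

lemma Ec_red: "Ec V E ends red Red = E" "Ec V E ends red Blue = {}"
  unfolding Ec_def col_verts_red using ends_V graph_ends_ne[OF graph] by auto

lemma G_red_red: "G_red V E ends red = (V, E)"
  unfolding G_red_eq col_verts_red Ec_red ..

lemma col_of_red: "C \<in> comps ends V A \<Longrightarrow> col_of red C = Red"
  using col_of_comp[of C ends V red Red A] col_verts_red by simp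

lemma red_supp:
  assumes "(A, \<sigma>) \<in> S" shows "(A, red) \<in> S"
proof -
  note sp = supp_props[OF assms]
  have "mw (A, red) = (\<Prod>C\<in>comps ends V A. Wc W Wh Red C)"
    unfolding mu_w_def using Delta_red[OF sp(1)] col_of_red by (simp cong: prod.cong)
  also have "\<dots> > 0"
  proof (rule prod_pos)
    fix C assume C: "C \<in> comps ends V A"
    show "0 < Wc W Wh Red C" using W_pos_Wc[OF conn_V[OF sp(1) C]] sp(5)[OF C] by blast
  qed
  finally show ?thesis using supp_iff sp red_col by (auto simp: states_iff)
qed

lemma Pc_nonneg: "fst x \<subseteq> E \<Longrightarrow> 0 \<le> P_colour V ends W Wh x y"
  unfolding P_colour_def using conn_V Wc_nonneg W_nonneg
  by (auto intro!: prod_nonneg divide_nonneg_nonneg)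

lemma Pc_stat:
  assumes y: "y \<in> S"
  shows "(\<Sum>x\<in>S. m x * P_colour V ends W Wh x y) = m y"
proof -
  obtain A \<sigma>' where yA: "y = (A, \<sigma>')" by (cases y)
  note sp = supp_props[OF y[unfolded yA]]
  let ?f = "\<lambda>x. m x * P_colour V ends W Wh x y"
  let ?D = "{\<sigma>\<in>colourings V. Delta ends A \<sigma>}"
  let ?Pcy = "\<Prod>C\<in>comps ends V A. Wc W Wh (col_of \<sigma>' C) C / W C"
  have SS: "S \<subseteq> states V E" unfolding supp_mu_def by auto
  have "(\<Sum>x\<in>S. ?f x) = (\<Sum>x\<in>states V E. ?f x)"
    by (rule sum.mono_neutral_left[OF fin_states SS]) (auto simp: not_supp_zero)
  also have "\<dots> = (\<Sum>x\<in>(\<lambda>\<sigma>. (A, \<sigma>)) ` ?D. ?f x)"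
  proof (rule sum.mono_neutral_right[OF fin_states])
    show "(\<lambda>\<sigma>. (A, \<sigma>)) ` ?D \<subseteq> states V E" using sp(1) by (auto simp: states_iff)
    show "\<forall>x\<in>states V E - (\<lambda>\<sigma>. (A, \<sigma>)) ` ?D. ?f x = 0"
    proof
      fix x assume x: "x \<in> states V E - (\<lambda>\<sigma>. (A, \<sigma>)) ` ?D"
      obtain A1 \<sigma> where xA: "x = (A1, \<sigma>)" by (cases x)
      show "?f x = 0"
      proof (cases "A1 = A")
        case True
        then have "\<not> Delta ends A \<sigma>" using x xA by (auto simp: states_iff)
        then have "mw x = 0" unfolding xA True mu_w_def by simp
        then show ?thesis unfolding m_eq by simp
      next
        case False
        then show ?thesis unfolding xA yA P_colour_def by simp
      qed
    qed
  qed
  also have "\<dots> = (\<Sum>\<sigma>\<in>?D. ?f (A, \<sigma>))"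
    by (rule sum.reindex[unfolded comp_def]) (auto intro: inj_onI)
  also have "\<dots> = (\<Sum>\<sigma>\<in>?D. (\<Prod>C\<in>comps ends V A. Wc W Wh (col_of \<sigma> C) C) / Z * ?Pcy)"
    by (rule sum.cong[OF refl]) (simp add: m_eq mu_w_def P_colour_def yA sp(3))
  also have "\<dots> = (\<Sum>\<sigma>\<in>?D. (\<Prod>C\<in>comps ends V A. Wc W Wh (col_of \<sigma> C) C)) / Z * ?Pcy"
    by (simp add: sum_divide_distrib sum_distrib_right)
  also have "\<dots> = (\<Prod>C\<in>comps ends V A. W C) / Z * ?Pcy"
    using colour_sum[OF graph sp(1), of "Wc W Wh"] by (simp add: Wc_sum)
  also have "(\<Prod>C\<in>comps ends V A. W C) * ?Pcy = (\<Prod>C\<in>comps ends V A. Wc W Wh (col_of \<sigma>' C) C)"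
    unfolding prod.distrib[symmetric] using sp(5) by (intro prod.cong refl) (simp add: less_imp_neq[symmetric])
  then have "(\<Prod>C\<in>comps ends V A. W C) / Z * ?Pcy = (\<Prod>C\<in>comps ends V A. Wc W Wh (col_of \<sigma>' C) C) / Z"
    by (simp only: times_divide_eq_left)
  also have "\<dots> = m y" unfolding m_eq yA mu_w_def using sp(3) by simp
  finally show ?thesis .
qed

end


context setting begin

lemma Ec_disj: "Ec V E ends \<tau> Red \<inter> Ec V E ends \<tau> Blue = {}"
proof -
  { fix e assume e: "e \<in> Ec V E ends \<tau> Red" "e \<in> Ec V E ends \<tau> Blue"
    then have "e \<in> E" "ends e \<subseteq> col_verts V \<tau> Red" "ends e \<subseteq> col_verts V \<tau> Blue" unfolding Ec_def by auto
    moreover obtain w where "w \<in> ends e" using graph_ends_ne[OF graph \<open>e \<in> E\<close>] by blast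
    ultimately have False unfolding col_verts_def by fastforce }
  then show ?thesis by blast
qed

lemma edge_split:
  assumes AE: "A \<subseteq> E" and D: "Delta ends A \<tau>"
  shows "A = (A \<inter> Ec V E ends \<tau> Red) \<union> (A \<inter> Ec V E ends \<tau> Blue)"
proof -
  { fix e assume e: "e \<in> A"
    have eE: "e \<in> E" using e AE by blast
    obtain w where w: "w \<in> ends e" using graph_ends_ne[OF graph eE] by blast
    have col: "\<forall>u\<in>ends e. \<tau> u = \<tau> w" using D e w unfolding Delta_def by blast
    have "ends e \<subseteq> col_verts V \<tau> (\<tau> w)" unfolding col_verts_def using col ends_V[OF eE] by auto
    then have "e \<in> Ec V E ends \<tau> (\<tau> w)" using eE unfolding Ec_def by simp
    then have "e \<in> Ec V E ends \<tau> Red \<or> e \<in> Ec V E ends \<tau> Blue" by (cases "\<tau> w") auto }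
  then show ?thesis by blast
qed

lemma Delta_union:
  assumes "a \<subseteq> Ec V E ends \<tau> Red" "b \<subseteq> Ec V E ends \<tau> Blue"
  shows "Delta ends (a \<union> b) \<tau>"
  unfolding Delta_def
proof (intro ballI)
  fix e x y assume e: "e \<in> a \<union> b" "x \<in> ends e" "y \<in> ends e"
  then have "(\<exists>c. ends e \<subseteq> col_verts V \<tau> c)" using assms unfolding Ec_def by blast
  then obtain c where "ends e \<subseteq> col_verts V \<tau> c" by blast
  then show "\<tau> x = \<tau> y" using e unfolding col_verts_def by auto
qed

lemma phi_w_nonneg: "a \<subseteq> Ec V E ends \<tau> Red \<Longrightarrow> 0 \<le> phi_w ends Wh (G_red V E ends \<tau>) a"
  unfolding phi_w_def G_red_eq fst_conv using conn_col weights by (auto intro!: prod_nonneg)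

lemma Qb_nonneg: "b \<subseteq> Ec V E ends \<tau> Blue \<Longrightarrow> 0 \<le> Qb V ends W Wh \<tau> b"
  unfolding Qb_def using conn_col Wc_nonneg[of _ Blue] by (auto intro!: prod_nonneg simp: Wc_def)

lemma Pb_eval: "P_bond V E ends Pm (A, \<sigma>) (B, \<tau>) =
   (if \<sigma> = \<tau> \<and> Delta ends B \<sigma> \<and> A \<inter> Ec V E ends \<sigma> Blue = B \<inter> Ec V E ends \<sigma> Blue
    then Pm (G_red V E ends \<sigma>) (A \<inter> Ec V E ends \<sigma> Red) (B \<inter> Ec V E ends \<sigma> Red) else 0)"
  unfolding P_bond_def Let_def G_blue_eq snd_conv fst_conv by (cases "\<sigma> = \<tau>") (simp_all add: G_red_eq)

lemma mw_split: "A \<subseteq> E \<Longrightarrow> Delta ends A \<tau> \<Longrightarrow>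
   mw (A, \<tau>) = phi_w ends Wh (G_red V E ends \<tau>) (A \<inter> Ec V E ends \<tau> Red) * Qb V ends W Wh \<tau> (A \<inter> Ec V E ends \<tau> Blue)"
  by (rule mu_w_split[OF graph])

end

locale setting2 = setting V E ends W Wh
  for V :: "'v set" and E :: "'e set" and ends :: "'e \<Rightarrow> 'v set"
    and W Wh :: "'v set \<times> 'e set \<Rightarrow> real" +
  fixes Pm :: "'v set \<times> 'e set \<Rightarrow> 'e set \<Rightarrow> 'e set \<Rightarrow> real"
  assumes Pm_trans: "\<And>\<sigma> A. (A, \<sigma>) \<in> supp_mu V E ends W Wh \<Longrightarrow>
        transition_matrix (Pow (snd (G_red V E ends \<sigma>))) (Pm (G_red V E ends \<sigma>))"
    and Pm_stat: "\<And>\<sigma> A. (A, \<sigma>) \<in> supp_mu V E ends W Wh \<Longrightarrow>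
        stationary (Pow (snd (G_red V E ends \<sigma>))) (Pm (G_red V E ends \<sigma>))
                   (phi ends Wh (G_red V E ends \<sigma>))"
    and Pm_erg: "irreducible_on {A \<in> Pow E. phi ends Wh (V, E) A > 0} (Pm (V, E))"
begin

lemma Pb_nonneg:
  assumes y: "y \<in> S" and z: "z \<in> states V E"
  shows "0 \<le> P_bond V E ends Pm y z"
proof -
  obtain A \<sigma> where yA: "y = (A, \<sigma>)" by (cases y)
  obtain B \<tau> where zB: "z = (B, \<tau>)" by (cases z)
  have tm: "transition_matrix (Pow (Ec V E ends \<sigma> Red)) (Pm (G_red V E ends \<sigma>))"
    using Pm_trans[OF y[unfolded yA]] by (simp add: G_red_eq)
  then have "0 \<le> Pm (G_red V E ends \<sigma>) (A \<inter> Ec V E ends \<sigma> Red) (B \<inter> Ec V E ends \<sigma> Red)"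
    unfolding transition_matrix_def by blast
  then show ?thesis unfolding yA zB Pb_eval by (cases "\<sigma> = \<tau>") auto
qed

lemma Pb_stat:
  assumes z: "z \<in> S"
  shows "(\<Sum>x\<in>S. m x * P_bond V E ends Pm x z) = m z"
proof -
  obtain B0 \<tau> where zB: "z = (B0, \<tau>)" by (cases z)
  note sp = supp_props[OF z[unfolded zB]]
  define H where "H = G_red V E ends \<tau>"
  define Er where "Er = Ec V E ends \<tau> Red"
  define Eb where "Eb = Ec V E ends \<tau> Blue"
  define b0 where "b0 = B0 \<inter> Eb"
  define br where "br = B0 \<inter> Er"
  define Zr where "Zr = (\<Sum>B\<in>Pow (snd H). phi_w ends Wh H B)"
  have sH: "snd H = Er" unfolding H_def Er_def G_red_eq by simp
  have disj: "Er \<inter> Eb = {}" unfolding Er_def Eb_def by (rule Ec_disj)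
  have ErE: "Er \<subseteq> E" and EbE: "Eb \<subseteq> E" unfolding Er_def Eb_def Ec_def by auto
  have mwz: "mw z = phi_w ends Wh H br * Qb V ends W Wh \<tau> b0"
    unfolding zB H_def br_def b0_def Er_def Eb_def by (rule mw_split[OF sp(1) sp(3)])
  have mwpos: "0 < mw z" using z supp_iff by blast
  have phn: "0 \<le> phi_w ends Wh H a" if "a \<subseteq> Er" for a
    unfolding H_def using phi_w_nonneg that Er_def by blast
  have qn: "0 \<le> Qb V ends W Wh \<tau> b0" using Qb_nonneg b0_def Eb_def by blast
  have phbr: "0 < phi_w ends Wh H br"
  proof -
    have "phi_w ends Wh H br \<noteq> 0" using mwpos mwz by auto
    then show ?thesis using phn[of br] br_def by (simp add: order_less_le)
  qed
  have finEr: "finite (Pow Er)" using ErE finE finite_subset by blast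
  have Zrpos: "0 < Zr"
  proof -
    have "phi_w ends Wh H br \<le> Zr" unfolding Zr_def sH
      by (rule member_le_sum) (use phn finEr br_def in auto)
    then show ?thesis using phbr by simp
  qed
  have phi_eq: "phi_w ends Wh H a = Zr * phi ends Wh H a" for a
    unfolding phi_def Zr_def[symmetric] using Zrpos by simp
  have stat: "(\<Sum>a\<in>Pow Er. phi ends Wh H a * Pm H a br) = phi ends Wh H br"
    using Pm_stat[OF z[unfolded zB]] br_def unfolding stationary_def H_def[symmetric] sH by auto
  let ?f = "\<lambda>x. m x * P_bond V E ends Pm x z"
  let ?g = "\<lambda>a. (a \<union> b0, \<tau>)"
  have SS: "S \<subseteq> states V E" unfolding supp_mu_def by auto
  have "(\<Sum>x\<in>S. ?f x) = (\<Sum>x\<in>states V E. ?f x)"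
    by (rule sum.mono_neutral_left[OF fin_states SS]) (auto simp: not_supp_zero)
  also have "\<dots> = (\<Sum>x\<in>?g ` Pow Er. ?f x)"
  proof (rule sum.mono_neutral_right[OF fin_states])
    have "a \<union> b0 \<subseteq> E" if "a \<subseteq> Er" for a using that ErE EbE unfolding b0_def by blast
    then show "?g ` Pow Er \<subseteq> states V E" using sp(2) by (auto simp: states_iff)
    show "\<forall>x\<in>states V E - ?g ` Pow Er. ?f x = 0"
    proof
      fix x assume x: "x \<in> states V E - ?g ` Pow Er"
      obtain A \<sigma> where xA: "x = (A, \<sigma>)" by (cases x)
      have AE: "A \<subseteq> E" using x xA by (auto simp: states_iff)
      show "?f x = 0"
      proof (cases "\<sigma> = \<tau> \<and> Delta ends A \<tau> \<and> A \<inter> Eb = b0")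
        case True
        then have "A = (A \<inter> Er) \<union> b0" using edge_split[OF AE, of \<tau>] unfolding Er_def Eb_def by blast
        then have "x \<in> ?g ` Pow Er" using True xA by auto
        then show ?thesis using x by blast
      next
        case False
        then consider "\<sigma> \<noteq> \<tau>" | "\<not> Delta ends A \<tau>" "\<sigma> = \<tau>" | "A \<inter> Eb \<noteq> b0" "\<sigma> = \<tau>" by blast
        then show ?thesis
        proof cases
          case 1 then show ?thesis unfolding xA zB Pb_eval by simp
        next
          case 2 then have "mw x = 0" unfolding xA mu_w_def by simp
          then show ?thesis unfolding m_eq by simp
        next
          case 3 then show ?thesis unfolding xA zB Pb_eval b0_def Eb_def by auto
        qed
      qed
    qed
  qed
  also have "\<dots> = (\<Sum>a\<in>Pow Er. ?f (?g a))"
  proof (rule sum.reindex[unfolded comp_def])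
    show "inj_on ?g (Pow Er)"
    proof (rule inj_onI)
      fix a a' assume "a \<in> Pow Er" "a' \<in> Pow Er" "?g a = ?g a'"
      then have "(a \<union> b0) \<inter> Er = (a' \<union> b0) \<inter> Er" "a \<subseteq> Er" "a' \<subseteq> Er" by auto
      moreover have "b0 \<inter> Er = {}" using disj b0_def by blast
      ultimately show "a = a'" by blast
    qed
  qed
  also have "\<dots> = (\<Sum>a\<in>Pow Er. Qb V ends W Wh \<tau> b0 / Z * Zr * (phi ends Wh H a * Pm H a br))"
  proof (rule sum.cong[OF refl])
    fix a assume a: "a \<in> Pow Er"
    have b0Eb: "b0 \<subseteq> Eb" unfolding b0_def by blast
    have i1: "(a \<union> b0) \<inter> Er = a" using a disj b0Eb by blast
    have i2: "(a \<union> b0) \<inter> Eb = b0" using a disj b0Eb by blast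
    have D: "Delta ends (a \<union> b0) \<tau>" using Delta_union a b0Eb unfolding Er_def Eb_def by blast
    have aE: "a \<union> b0 \<subseteq> E" using a b0Eb ErE EbE by blast
    have "mw (?g a) = phi_w ends Wh H a * Qb V ends W Wh \<tau> b0"
      using mw_split[OF aE D] i1 i2 unfolding H_def Er_def Eb_def by simp
    moreover have "P_bond V E ends Pm (?g a) z = Pm H a br"
      unfolding zB Pb_eval using sp(3) i1 i2 b0_def unfolding H_def br_def Er_def Eb_def by simp
    ultimately show "?f (?g a) = Qb V ends W Wh \<tau> b0 / Z * Zr * (phi ends Wh H a * Pm H a br)"
      unfolding m_eq phi_eq by simp
  qed
  also have "\<dots> = Qb V ends W Wh \<tau> b0 / Z * Zr * phi ends Wh H br"
    by (subst sum_distrib_left[symmetric]) (simp only: stat)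
  also have "\<dots> = Qb V ends W Wh \<tau> b0 / Z * phi_w ends Wh H br"
    by (simp add: phi_eq)
  also have "\<dots> = m z" unfolding m_eq mwz by simp
  finally show ?thesis .
qed

end


context setting2 begin

abbreviation P where "P \<equiv> matmul S (P_colour V ends W Wh) (P_bond V E ends Pm)"

lemma stat_P: "z \<in> S \<Longrightarrow> (\<Sum>x\<in>S. m x * P x z) = m z"
proof -
  assume z: "z \<in> S"
  have "(\<Sum>x\<in>S. m x * P x z) = (\<Sum>x\<in>S. \<Sum>y\<in>S. m x * P_colour V ends W Wh x y * P_bond V E ends Pm y z)"
    unfolding matmul_def by (simp add: sum_distrib_left mult.assoc)
  also have "\<dots> = (\<Sum>y\<in>S. \<Sum>x\<in>S. m x * P_colour V ends W Wh x y * P_bond V E ends Pm y z)"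
    by (rule sum.swap)
  also have "\<dots> = (\<Sum>y\<in>S. (\<Sum>x\<in>S. m x * P_colour V ends W Wh x y) * P_bond V E ends Pm y z)"
    by (simp add: sum_distrib_right)
  also have "\<dots> = (\<Sum>y\<in>S. m y * P_bond V E ends Pm y z)"
    by (rule sum.cong[OF refl]) (simp add: Pc_stat)
  also have "\<dots> = m z" by (rule Pb_stat[OF z])
  finally show ?thesis .
qed

lemma P_lower:
  assumes x: "x \<in> S" and y: "y \<in> S" and z: "z \<in> S"
  shows "P_colour V ends W Wh x y * P_bond V E ends Pm y z \<le> P x z"
  unfolding matmul_def
proof (rule member_le_sum[OF y])
  have SS: "S \<subseteq> states V E" unfolding supp_mu_def by auto
  have "x \<in> Pow E \<times> colourings V" using x SS unfolding states_def by blast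
  then have xE: "fst x \<subseteq> E" by (auto simp: mem_Times_iff)
  show "0 \<le> P_colour V ends W Wh x y' * P_bond V E ends Pm y' z" if "y' \<in> S - {y}" for y'
  proof (rule mult_nonneg_nonneg)
    show "0 \<le> P_colour V ends W Wh x y'" by (rule Pc_nonneg[OF xE])
    show "0 \<le> P_bond V E ends Pm y' z" using Pb_nonneg[of y' z] that z SS by blast
  qed
  show "finite S" using fin_states SS finite_subset by blast
qed

abbreviation rel where "rel \<equiv> {(a, b). a \<in> S \<and> b \<in> S \<and> P a b > 0}"
abbreviation T where "T \<equiv> {A \<in> Pow E. phi ends Wh (V, E) A > 0}"

lemma mw_red: "A \<subseteq> E \<Longrightarrow> mw (A, red) = phi_w ends Wh (V, E) A"
  unfolding mu_w_def phi_w_def using Delta_red[of A] col_of_red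
  by (simp add: Wc_def cong: prod.cong)

lemma phiVE_nonneg: "B \<subseteq> E \<Longrightarrow> 0 \<le> phi_w ends Wh (V, E) B"
  using phi_w_nonneg[of B red] by (simp add: Ec_red G_red_red)

lemma T_of_supp: assumes "(A, \<sigma>) \<in> S" shows "A \<in> T"
proof -
  have AE: "A \<subseteq> E" using supp_props[OF assms] by blast
  have pos: "0 < phi_w ends Wh (V, E) A" using red_supp[OF assms] supp_iff mw_red[OF AE] by auto
  have "phi_w ends Wh (V, E) A \<le> (\<Sum>B\<in>Pow E. phi_w ends Wh (V, E) B)"
    by (rule member_le_sum) (use AE phiVE_nonneg finE in auto)
  then show ?thesis unfolding phi_def using pos AE by simp
qed

lemma supp_of_T: assumes "A \<in> T" "0 < Z" shows "(A, red) \<in> S"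
proof -
  have AE: "A \<subseteq> E" using assms by blast
  have "0 < phi_w ends Wh (V, E) A"
    using assms(1) phiVE_nonneg[OF AE] unfolding phi_def by (auto simp: zero_less_divide_iff)
  then show ?thesis using supp_iff mw_red[OF AE] AE red_col assms(2) by (auto simp: states_iff)
qed

lemma step_red:
  assumes x: "(A, \<sigma>) \<in> S" and A': "A' \<in> T" and pm: "0 < Pm (V, E) A A'"
  shows "((A, \<sigma>), (A', red)) \<in> rel"
proof -
  note sp = supp_props[OF x]
  have y: "(A, red) \<in> S" by (rule red_supp[OF x])
  have z: "(A', red) \<in> S" by (rule supp_of_T[OF A' sp(4)])
  have A'E: "A' \<subseteq> E" using A' by blast
  have "P_colour V ends W Wh (A, \<sigma>) (A, red) = (\<Prod>C\<in>comps ends V A. Wc W Wh Red C / W C)"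
    unfolding P_colour_def using Delta_red[OF sp(1)] col_of_red by (simp cong: prod.cong)
  also have "\<dots> > 0"
  proof (rule prod_pos)
    fix C assume C: "C \<in> comps ends V A"
    have "0 < W C" using sp(5)[OF C] by blast
    moreover have "0 < Wc W Wh Red C" using W_pos_Wc[OF conn_V[OF sp(1) C]] calculation by blast
    ultimately show "0 < Wc W Wh Red C / W C" by simp
  qed
  finally have pc: "0 < P_colour V ends W Wh (A, \<sigma>) (A, red)" .
  have "P_bond V E ends Pm (A, red) (A', red) = Pm (V, E) A A'"
    unfolding Pb_eval using Delta_red[OF A'E] sp(1) A'E by (simp add: Ec_red G_red_red Int_absorb2)
  then have pb: "0 < P_bond V E ends Pm (A, red) (A', red)" using pm by simp
  have "0 < P (A, \<sigma>) (A', red)" using P_lower[OF x y z] pc pb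
    by (meson less_le_trans mult_pos_pos)
  then show ?thesis using x z by simp
qed

lemma step_final:
  assumes x: "(X, \<rho>) \<in> S" and y: "(X, \<tau>) \<in> S" and z: "(B, \<tau>) \<in> S"
    and eb: "X \<inter> Ec V E ends \<tau> Blue = B \<inter> Ec V E ends \<tau> Blue"
    and pm: "0 < Pm (G_red V E ends \<tau>) (X \<inter> Ec V E ends \<tau> Red) (B \<inter> Ec V E ends \<tau> Red)"
  shows "((X, \<rho>), (B, \<tau>)) \<in> rel"
proof -
  note sp = supp_props[OF y]
  note spz = supp_props[OF z]
  have "P_colour V ends W Wh (X, \<rho>) (X, \<tau>) = (\<Prod>C\<in>comps ends V X. Wc W Wh (col_of \<tau> C) C / W C)"
    unfolding P_colour_def using sp(3) by simp
  also have "\<dots> > 0"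
    by (rule prod_pos) (use sp(5) in auto)
  finally have pc: "0 < P_colour V ends W Wh (X, \<rho>) (X, \<tau>)" .
  have pb: "0 < P_bond V E ends Pm (X, \<tau>) (B, \<tau>)"
    unfolding Pb_eval using spz(3) eb pm by simp
  have "0 < P (X, \<rho>) (B, \<tau>)" using P_lower[OF x y z] pc pb
    by (meson less_le_trans mult_pos_pos)
  then show ?thesis using x z by simp
qed

lemma path_red:
  assumes p: "(A, Y) \<in> {(a, b). a \<in> T \<and> b \<in> T \<and> Pm (V, E) a b > 0}\<^sup>*" and x: "(A, \<sigma>) \<in> S"
  shows "Y = A \<or> ((A, \<sigma>), (Y, red)) \<in> rel\<^sup>*"
  using p
proof (induction rule: rtrancl_induct)
  case base then show ?case by simp
next
  case (step Y Y')
  then have Y: "Y \<in> T" and Y': "Y' \<in> T" and pm: "0 < Pm (V, E) Y Y'" by auto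
  show ?case
  proof (cases "Y = A")
    case True
    then have "((A, \<sigma>), (Y', red)) \<in> rel" using step_red[OF x Y' ] pm by simp
    then show ?thesis by blast
  next
    case False
    then have r: "((A, \<sigma>), (Y, red)) \<in> rel\<^sup>*" using step.IH by simp
    have "(Y, red) \<in> S" using supp_of_T[OF Y] supp_props(4)[OF x] by blast
    then have "((Y, red), (Y', red)) \<in> rel" using step_red[OF _ Y' pm] by blast
    then show ?thesis using r by (meson rtrancl.rtrancl_into_rtrancl)
  qed
qed

lemma irreducible_P: "irreducible_on S P"
  unfolding irreducible_on_def
proof (intro ballI)
  fix x z assume x: "x \<in> S" and z: "z \<in> S"
  obtain A \<sigma> where xA: "x = (A, \<sigma>)" by (cases x)
  obtain B \<tau> where zB: "z = (B, \<tau>)" by (cases z)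
  note spx = supp_props[OF x[unfolded xA]]
  note spz = supp_props[OF z[unfolded zB]]
  define H where "H = G_red V E ends \<tau>"
  define Er where "Er = Ec V E ends \<tau> Red"
  define Eb where "Eb = Ec V E ends \<tau> Blue"
  define b0 where "b0 = B \<inter> Eb"
  define br where "br = B \<inter> Er"
  define Zr where "Zr = (\<Sum>B\<in>Pow (snd H). phi_w ends Wh H B)"
  have sH: "snd H = Er" unfolding H_def Er_def G_red_eq by simp
  have disj: "Er \<inter> Eb = {}" unfolding Er_def Eb_def by (rule Ec_disj)
  have ErE: "Er \<subseteq> E" and EbE: "Eb \<subseteq> E" unfolding Er_def Eb_def Ec_def by auto
  have mwz: "mw z = phi_w ends Wh H br * Qb V ends W Wh \<tau> b0"
    unfolding zB H_def br_def b0_def Er_def Eb_def by (rule mw_split[OF spz(1) spz(3)])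
  have mwpos: "0 < mw z" using z supp_iff by blast
  have phn: "0 \<le> phi_w ends Wh H a" if "a \<subseteq> Er" for a
    unfolding H_def using phi_w_nonneg that Er_def by blast
  have qn: "0 \<le> Qb V ends W Wh \<tau> b0" using Qb_nonneg b0_def Eb_def by blast
  have phbr: "0 < phi_w ends Wh H br"
  proof -
    have "phi_w ends Wh H br \<noteq> 0" using mwpos mwz by auto
    then show ?thesis using phn[of br] br_def by (simp add: order_less_le)
  qed
  have qpos: "0 < Qb V ends W Wh \<tau> b0"
  proof -
    have "Qb V ends W Wh \<tau> b0 \<noteq> 0" using mwpos mwz by auto
    then show ?thesis using qn by (simp add: order_less_le)
  qed
  have finEr: "finite (Pow Er)" using ErE finE finite_subset by blast
  have Zrpos: "0 < Zr"
  proof -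
    have "phi_w ends Wh H br \<le> Zr" unfolding Zr_def sH
      by (rule member_le_sum) (use phn finEr br_def in auto)
    then show ?thesis using phbr by simp
  qed
  have phi_eq: "phi_w ends Wh H a = Zr * phi ends Wh H a" for a
    unfolding phi_def Zr_def[symmetric] using Zrpos by simp
  have phin: "0 \<le> phi ends Wh H a" if "a \<subseteq> Er" for a
    using phn[OF that] Zrpos phi_eq[of a] by (simp add: zero_le_mult_iff)
  have stat: "(\<Sum>a\<in>Pow Er. phi ends Wh H a * Pm H a br) = phi ends Wh H br"
    using Pm_stat[OF z[unfolded zB]] br_def unfolding stationary_def H_def[symmetric] sH by auto
  have "0 < phi ends Wh H br" using phbr phi_eq[of br] Zrpos by (simp add: zero_less_mult_iff)
  then have "0 < (\<Sum>a\<in>Pow Er. phi ends Wh H a * Pm H a br)" using stat by simp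
  then obtain a where a: "a \<in> Pow Er" and apos: "0 < phi ends Wh H a * Pm H a br"
    by (meson not_le sum_nonpos)
  have pha: "0 < phi ends Wh H a" and pma: "0 < Pm H a br"
    using apos phin[of a] a by (auto simp: zero_less_mult_iff)
  define X where "X = a \<union> b0"
  have b0Eb: "b0 \<subseteq> Eb" unfolding b0_def by blast
  have i1: "X \<inter> Er = a" using a disj b0Eb unfolding X_def by blast
  have i2: "X \<inter> Eb = b0" using a disj b0Eb unfolding X_def by blast
  have D: "Delta ends X \<tau>" using Delta_union a b0Eb unfolding Er_def Eb_def X_def by blast
  have XE: "X \<subseteq> E" using a b0Eb ErE EbE unfolding X_def by blast
  have "mw (X, \<tau>) = phi_w ends Wh H a * Qb V ends W Wh \<tau> b0"
    using mw_split[OF XE D] i1 i2 unfolding H_def Er_def Eb_def by simp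
  also have "\<dots> > 0" using phi_eq[of a] Zrpos pha qpos by simp
  finally have XS: "(X, \<tau>) \<in> S" using supp_iff XE spz(2) spz(4) by (auto simp: states_iff)
  have fin: "((X, \<rho>), (B, \<tau>)) \<in> rel" if "(X, \<rho>) \<in> S" for \<rho>
    by (rule step_final[OF that XS z[unfolded zB]])
       (use i1 i2 pma b0_def br_def in \<open>simp_all add: H_def Er_def Eb_def\<close>)
  have AT: "A \<in> T" by (rule T_of_supp[OF x[unfolded xA]])
  have XT: "X \<in> T" by (rule T_of_supp[OF XS])
  have "(A, X) \<in> {(a, b). a \<in> T \<and> b \<in> T \<and> Pm (V, E) a b > 0}\<^sup>*"
    using Pm_erg AT XT unfolding irreducible_on_def by blast
  from path_red[OF this x[unfolded xA]]
  show "(x, z) \<in> rel\<^sup>*"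
  proof
    assume "X = A"
    then show ?thesis using fin[of \<sigma>] x xA zB by auto
  next
    assume r: "((A, \<sigma>), (X, red)) \<in> rel\<^sup>*"
    have "(X, red) \<in> S" using red_supp[OF XS] .
    then have "((X, red), (B, \<tau>)) \<in> rel" by (rule fin)
    then show ?thesis using r xA zB by (meson rtrancl.rtrancl_into_rtrancl)
  qed
qed

end

theorem proposition3:
  fixes V :: "'v set" and E :: "'e set" and ends :: "'e \<Rightarrow> 'v set"
    and W Wh :: "'v set \<times> 'e set \<Rightarrow> real"
    and Pm :: "'v set \<times> 'e set \<Rightarrow> 'e set \<Rightarrow> 'e set \<Rightarrow> real"
  assumes graph: "finite_graph V E ends"
    and weights: "\<And>C. conn_subgraph V E ends C \<Longrightarrow>
        W C \<ge> 0 \<and> Wh C \<ge> 0 \<and> (W C = 0 \<longrightarrow> Wh C = 0) \<and> (W C > 0 \<longrightarrow> 0 < Wh C \<and> Wh C < W C)"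
    and Pm_trans: "\<And>\<sigma> A. (A, \<sigma>) \<in> supp_mu V E ends W Wh \<Longrightarrow>
        transition_matrix (Pow (snd (G_red V E ends \<sigma>))) (Pm (G_red V E ends \<sigma>))"
    and Pm_stat: "\<And>\<sigma> A. (A, \<sigma>) \<in> supp_mu V E ends W Wh \<Longrightarrow>
        stationary (Pow (snd (G_red V E ends \<sigma>))) (Pm (G_red V E ends \<sigma>))
                   (phi ends Wh (G_red V E ends \<sigma>))"
    and Pm_erg: "irreducible_on {A \<in> Pow E. phi ends Wh (V, E) A > 0} (Pm (V, E))"
  shows "irreducible_on (supp_mu V E ends W Wh)
           (matmul (supp_mu V E ends W Wh) (P_colour V ends W Wh) (P_bond V E ends Pm))
       \<and> stationary (supp_mu V E ends W Wh)
           (matmul (supp_mu V E ends W Wh) (P_colour V ends W Wh) (P_bond V E ends Pm))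
           (mu V E ends W Wh)"
proof -
  interpret setting2 V E ends W Wh Pm
    using graph weights Pm_trans Pm_stat Pm_erg by unfold_locales
  show ?thesis using irreducible_P stat_P unfolding stationary_def by blast
qed

end
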